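(* Assume $\bar\Phi_p=0$ and $\Phi_p^\top\Phi_p=\mathrm{diag}(\sigma_1^2,\dots,\sigma_d^2)$ with all $\sigma_j^2>0$. Let $\Lambda=\mathrm{diag}(\lambda_1,\dots,\lambda_d)$ with $\lambda_j\ge0$, let $\hat\beta^\Lambda_{\mathrm{ridge}}:=(\Phi_p^\top\Phi_p+\Lambda)^{-1}\Phi_p^\top Y_p$, let $\delta\ge 0$, and let $\hat w^\delta_{\ell_2}$ be the $\ell_2$ balancing weights, $\tfrac1n\hat w^\delta_{\ell_2}=\bar\Phi_q(\Phi_p^\top\Phi_p+\delta I)^{-1}\Phi_p^\top$. Define $\Gamma=\mathrm{diag}(\gamma_1,\dots,\gamma_d)$ with $$\gamma_j:=\frac{\delta\lambda_j}{\sigma_j^2+\lambda_j+\delta}$$ (with $\gamma_j:=0$ if the denominator is $0$ is impossible here since $\sigma_j^2>0$). Then $0\le\gamma_j\le\lambda_j$ for all $j$ and $$\bar\Phi_q\hat\beta^\Lambda_{\mathrm{ridge}}+\tfrac1n\hat w^\delta_{\ell_2}(Y_p-\Phi_p\hat\beta^\Lambda_{\mathrm{ridge}})=\bar\Phi_q\hat\beta^\Gamma_{\mathrm{ridge}},\qquad \hat\beta^\Gamma_{\mathrm{ridge}}:=(\Phi_p^\top\Phi_p+\Gamma)^{-1}\Phi_p^\top Y_p.$$ Moreover, if $\lambda_j=\lambda$ and $\sigma_j=\sigma$ for all $j$, then all $\gamma_j$ are equal, so $\hat\beta^\Gamma_{\mathrm{ridge}}$ is a standard ridge regression estimator.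
   Context: $\Phi_p\in\mathbb{R}^{n\times d}$ (source features), $Y_p\in\mathbb{R}^n$ (outcomes), $\Phi_q\in\mathbb{R}^{n\times d}$ (target features); $\bar\Phi_p,\bar\Phi_q\in\mathbb{R}^{1\times d}$ are column averages. The left-hand side is the augmented ("double ridge") estimator combining a generalized ridge outcome model with $\ell_2$ balancing weights. *)

theory Defs
  imports "HOL-Analysis.Analysis"
begin

text \<open>Matrices with n rows (index type 'n) and d columns (index type 'd):
  a feature matrix is of type real^'d^'n.\<close>

definition col_avg :: "real^'d^'n \<Rightarrow> real^'d" where
  "col_avg Phi = (\<chi> j. (\<Sum>i\<in>UNIV. Phi $ i $ j) / real CARD('n))"

definition diagm :: "real^'d \<Rightarrow> real^'d^'d" where
  "diagm v = (\<chi> i j. if i = j then v $ i else 0)"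

definition ridge :: "real^'d^'n \<Rightarrow> real^'n \<Rightarrow> real^'d^'d \<Rightarrow> real^'d" where
  "ridge Phi Y Lam = matrix_inv (transpose Phi ** Phi + Lam) *v (transpose Phi *v Y)"

text \<open>(1/n) times the l2 balancing weights, as a (row) vector of length n:
  bar Phi_q (Phi_p^T Phi_p + delta I)^{-1} Phi_p^T.\<close>
definition l2_weights_scaled :: "real^'d^'n \<Rightarrow> real^'d^'n \<Rightarrow> real \<Rightarrow> real^'n" where
  "l2_weights_scaled Phip Phiq delta =
     col_avg Phiq v* (matrix_inv (transpose Phip ** Phip + delta *\<^sub>R mat 1) ** transpose Phip)"

definition gamma_vec :: "real^'d \<Rightarrow> real^'d \<Rightarrow> real \<Rightarrow> real^'d" where
  "gamma_vec sig lam delta = (\<chi> j. delta * lam $ j / ((sig $ j)\<^sup>2 + lam $ j + delta))"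

end

theory Submission
  imports Defs
begin

lemma matrix_inv_eq:
  fixes A B :: "real^'d^'d"
  assumes "A ** B = mat 1" "B ** A = mat 1"
  shows "matrix_inv A = B"
proof -
  let ?C = "matrix_inv A"
  have "A ** ?C = mat 1 \<and> ?C ** A = mat 1"
    unfolding matrix_inv_def by (rule someI[of _ B]) (use assms in auto)
  then have "?C = ?C ** (A ** B)" "?C ** A = mat 1" using assms by auto
  then show ?thesis by (metis matrix_mul_assoc matrix_mul_lid matrix_mul_rid)
qed

lemma diagm_mul: "diagm u ** diagm v = diagm (\<chi> j. u $ j * v $ j)"
  unfolding diagm_def matrix_matrix_mult_def
  by (simp add: vec_eq_iff if_distrib[of "\<lambda>x. _ * x"] cong: if_cong)

lemma diagm_add: "diagm u + diagm v = diagm (u + v)"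
  unfolding diagm_def by (simp add: vec_eq_iff)

lemma mat1_diagm: "c *\<^sub>R (mat 1 :: real^'d^'d) = diagm (\<chi> j. c)"
  unfolding diagm_def mat_def by (simp add: vec_eq_iff)

lemma diagm_inv:
  assumes "\<forall>j. u $ j \<noteq> 0"
  shows "matrix_inv (diagm u) = diagm (\<chi> j. 1 / u $ j)"
proof (rule matrix_inv_eq)
  show "diagm u ** diagm (\<chi> j. 1 / u $ j) = mat 1"
    using assms unfolding diagm_mul by (simp add: diagm_def mat_def vec_eq_iff)
  show "diagm (\<chi> j. 1 / u $ j) ** diagm u = mat 1"
    using assms unfolding diagm_mul by (simp add: diagm_def mat_def vec_eq_iff)
qed

lemma diagm_mv: "diagm u *v x = (\<chi> j. u $ j * x $ j)"
  unfolding diagm_def matrix_vector_mult_def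
  by (simp add: vec_eq_iff if_distrib[of "\<lambda>x. x * _"] cong: if_cong)

lemma alg:
  fixes x l d bb :: real
  assumes "x + l > 0" "x + d > 0" "x + l + d > 0"
  shows "bb / (x + l) + (bb - x * (bb / (x + l))) / (x + d) = bb / ((x + d) * (x + l) / (x + l + d))"
proof -
  have e1: "bb - x * (bb / (x + l)) = bb * l / (x + l)" using assms by (simp add: field_simps)
  have n1: "x + l \<noteq> 0" "x + d \<noteq> 0" using assms by auto
  have f1: "bb / (x + l) = bb * (x + d) / ((x + d) * (x + l))" using n1 by simp
  have f2: "bb * l / (x + l) / (x + d) = bb * l / ((x + d) * (x + l))" by (simp add: mult.commute)
  have "bb / (x + l) + bb * l / (x + l) / (x + d) = (bb * (x + d) + bb * l) / ((x + d) * (x + l))"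
    unfolding f1 f2 by (rule add_divide_distrib[symmetric])
  also have "\<dots> = bb * (x + l + d) / ((x + d) * (x + l))" by (simp add: algebra_simps)
  finally have c1: "bb / (x + l) + bb * l / (x + l) / (x + d) = bb * (x + l + d) / ((x + d) * (x + l))" .
  have c2: "bb * (x + l + d) / ((x + d) * (x + l)) = bb / ((x + d) * (x + l) / (x + l + d))" by simp
  show ?thesis unfolding e1 by (rule trans[OF c1 c2])
qed

theorem mainTheorem5:
  fixes Phip Phiq :: "real^'d^'n" and Y :: "real^'n"
    and sig lam :: "real^'d" and delta :: real
  assumes "col_avg Phip = 0"
    and "transpose Phip ** Phip = diagm (\<chi> j. (sig $ j)\<^sup>2)"
    and "\<forall>j. (sig $ j)\<^sup>2 > 0"
    and "\<forall>j. lam $ j \<ge> 0"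
    and "delta \<ge> 0"
  shows "(\<forall>j. 0 \<le> gamma_vec sig lam delta $ j \<and> gamma_vec sig lam delta $ j \<le> lam $ j)
    \<and> col_avg Phiq \<bullet> ridge Phip Y (diagm lam)
        + l2_weights_scaled Phip Phiq delta \<bullet> (Y - Phip *v ridge Phip Y (diagm lam))
      = col_avg Phiq \<bullet> ridge Phip Y (diagm (gamma_vec sig lam delta))
    \<and> ((\<forall>i j. lam $ i = lam $ j \<and> sig $ i = sig $ j)
        \<longrightarrow> (\<forall>i j. gamma_vec sig lam delta $ i = gamma_vec sig lam delta $ j))"
proof (intro conjI)
  define s where "s = (\<chi> j. (sig $ j)\<^sup>2)"
  define g where "g = gamma_vec sig lam delta"
  define b where "b = transpose Phip *v Y"
  define q where "q = col_avg Phiq"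
  have S: "transpose Phip ** Phip = diagm s" using assms(2) s_def by simp
  have sp: "\<And>j. s $ j > 0" using assms(3) s_def by simp
  have lp: "\<And>j. lam $ j \<ge> 0" using assms(4) by simp
  have gdef: "\<And>j. g $ j = delta * lam $ j / (s $ j + lam $ j + delta)"
    by (simp add: g_def gamma_vec_def s_def)
  have gp: "\<And>j. g $ j \<ge> 0"
  proof -
    fix j
    have "s $ j + lam $ j + delta \<ge> 0" using sp[of j] lp[of j] assms(5) by linarith
    then show "g $ j \<ge> 0" unfolding gdef using lp[of j] assms(5) by simp
  qed
  show "\<forall>j. 0 \<le> gamma_vec sig lam delta $ j \<and> gamma_vec sig lam delta $ j \<le> lam $ j"
  proof
    fix j
    have pos: "s $ j + lam $ j + delta > 0" using sp[of j] lp[of j] assms(5) by linarith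
    have "delta * lam $ j \<le> lam $ j * (s $ j + lam $ j + delta)"
      using sp[of j] lp[of j] by (simp add: algebra_simps mult_nonneg_nonneg)
    then have "g $ j \<le> lam $ j" using pos by (simp add: gdef divide_le_eq)
    then show "0 \<le> gamma_vec sig lam delta $ j \<and> gamma_vec sig lam delta $ j \<le> lam $ j"
      using gp g_def by simp
  qed
  have ridge_eq: "\<And>l. (\<forall>j. l $ j \<ge> 0) \<Longrightarrow> ridge Phip Y (diagm l) = (\<chi> j. b $ j / (s $ j + l $ j))"
  proof -
    fix l :: "real^'d" assume "\<forall>j. l $ j \<ge> 0"
    then have "\<forall>j. (s + l) $ j \<noteq> 0" using sp by (metis add_pos_nonneg less_irrefl vector_add_component)
    then show "ridge Phip Y (diagm l) = (\<chi> j. b $ j / (s $ j + l $ j))"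
      unfolding ridge_def S diagm_add b_def by (simp add: diagm_inv diagm_mv vec_eq_iff)
  qed
  have R1: "ridge Phip Y (diagm lam) = (\<chi> j. b $ j / (s $ j + lam $ j))" using ridge_eq lp by auto
  have R2: "ridge Phip Y (diagm g) = (\<chi> j. b $ j / (s $ j + g $ j))" using ridge_eq gp by auto
  have dnz: "\<forall>j. (s + (\<chi> j. delta)) $ j \<noteq> 0" using sp assms(5)
    by (metis add_pos_nonneg less_irrefl vector_add_component vec_lambda_beta)
  have W: "l2_weights_scaled Phip Phiq delta \<bullet> (Y - Phip *v ridge Phip Y (diagm lam))
     = q \<bullet> (diagm (\<chi> j. 1 / (s $ j + delta)) *v (b - diagm s *v ridge Phip Y (diagm lam)))"
  proof -
    have "l2_weights_scaled Phip Phiq delta \<bullet> (Y - Phip *v ridge Phip Y (diagm lam))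
      = q \<bullet> (matrix_inv (diagm (s + (\<chi> j. delta))) *v (transpose Phip *v (Y - Phip *v ridge Phip Y (diagm lam))))"
      unfolding l2_weights_scaled_def q_def S mat1_diagm diagm_add dot_lmul_matrix
      by (simp only: matrix_vector_mul_assoc)
    also have "transpose Phip *v (Y - Phip *v ridge Phip Y (diagm lam)) = b - diagm s *v ridge Phip Y (diagm lam)"
      unfolding b_def by (simp only: matrix_vector_mult_diff_distrib matrix_vector_mul_assoc S)
    finally show ?thesis using dnz by (simp add: diagm_inv)
  qed
  have key: "\<And>j. b $ j / (s $ j + lam $ j) + (b $ j - s $ j * (b $ j / (s $ j + lam $ j))) / (s $ j + delta)
      = b $ j / (s $ j + g $ j)"
  proof -
    fix j
    have a: "s $ j + lam $ j > 0" "s $ j + delta > 0" "s $ j + lam $ j + delta > 0"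
      using sp[of j] lp[of j] assms(5) by linarith+
    have "s $ j + g $ j = (s $ j + delta) * (s $ j + lam $ j) / (s $ j + lam $ j + delta)"
      using a by (simp add: gdef field_simps)
    note h = this
    show "?thesis j" unfolding h using a by (rule alg)
  qed
  show "col_avg Phiq \<bullet> ridge Phip Y (diagm lam)
        + l2_weights_scaled Phip Phiq delta \<bullet> (Y - Phip *v ridge Phip Y (diagm lam))
      = col_avg Phiq \<bullet> ridge Phip Y (diagm (gamma_vec sig lam delta))"
    unfolding W unfolding g_def[symmetric] q_def[symmetric] R1 R2
    apply (simp add: inner_vec_def diagm_mv sum.distrib[symmetric])
    apply (rule sum.cong, rule refl)
    subgoal for j
      using arg_cong[OF key[of j], of "\<lambda>z. q $ j * z"] by (simp add: distrib_left)
    done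
  show "(\<forall>i j. lam $ i = lam $ j \<and> sig $ i = sig $ j)
        \<longrightarrow> (\<forall>i j. gamma_vec sig lam delta $ i = gamma_vec sig lam delta $ j)"
  proof (intro impI allI)
    fix i j assume h: "\<forall>i j. lam $ i = lam $ j \<and> sig $ i = sig $ j"
    then have "lam $ i = lam $ j" "sig $ i = sig $ j" by auto
    then show "gamma_vec sig lam delta $ i = gamma_vec sig lam delta $ j"
      unfolding gamma_vec_def by simp
  qed
qed

end
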